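(* Let $A$ and $B$ be self-adjoint operators on the same complex Hilbert space, with $B$ bounded and non-negative. If $B \neq 0$, then $\bigcup_{t\in\mathbb{R}} \sigma(A+tB)$ is a dense subset of $\mathbb{R}$.
   Context: $\sigma(T)$ denotes the spectrum of an operator $T$. $A$ may be unbounded; $A+tB$ is defined on the domain of $A$. *)

theory Defs
  imports "HOL-Analysis.Analysis"
begin

text \<open>HOL-Analysis only has real inner product spaces, so we introduce complex Hilbert
spaces as a type class: a (real) Banach space carrying a complex scalar multiplication
extending the real one, and a complex inner product (conjugate-linear in the first
argument, linear in the second) that induces the norm.\<close>

class chilbert_space = banach +
  fixes scaleC :: "complex \<Rightarrow> 'a \<Rightarrow> 'a" (infixr \<open>*\<^sub>C\<close> 75)
    and cinner :: "'a \<Rightarrow> 'a \<Rightarrow> complex"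
  assumes scaleC_of_real: "scaleC (complex_of_real r) x = scaleR r x"
    and scaleC_add_right: "scaleC a (x + y) = scaleC a x + scaleC a y"
    and scaleC_add_left: "scaleC (a + b) x = scaleC a x + scaleC b x"
    and scaleC_scaleC: "scaleC a (scaleC b x) = scaleC (a * b) x"
    and scaleC_one: "scaleC 1 x = x"
    and cinner_add_left: "cinner (x + y) z = cinner x z + cinner y z"
    and cinner_scaleC_left: "cinner (scaleC a x) y = cnj a * cinner x y"
    and cinner_commute: "cinner x y = cnj (cinner y x)"
    and cinner_self_nonneg: "0 \<le> Re (cinner x x)"
    and cinner_self_eq_zero: "cinner x x = 0 \<longleftrightarrow> x = 0"
    and norm_eq_sqrt_cinner: "norm x = sqrt (Re (cinner x x))"

section \<open>(Possibly unbounded) operators, given by a domain and an action on it\<close>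

definition complex_subspace :: "'a::chilbert_space set \<Rightarrow> bool" where
  "complex_subspace D \<longleftrightarrow> 0 \<in> D \<and> (\<forall>x\<in>D. \<forall>y\<in>D. x + y \<in> D) \<and> (\<forall>c. \<forall>x\<in>D. c *\<^sub>C x \<in> D)"

definition clinear_on :: "'a::chilbert_space set \<Rightarrow> ('a \<Rightarrow> 'a) \<Rightarrow> bool" where
  "clinear_on D T \<longleftrightarrow> (\<forall>x\<in>D. \<forall>y\<in>D. T (x + y) = T x + T y) \<and> (\<forall>c. \<forall>x\<in>D. T (c *\<^sub>C x) = c *\<^sub>C T x)"

definition adjoint_domain :: "'a::chilbert_space set \<Rightarrow> ('a \<Rightarrow> 'a) \<Rightarrow> 'a set" where
  "adjoint_domain D T = {y. \<exists>z. \<forall>x\<in>D. cinner (T x) y = cinner x z}"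

text \<open>Self-adjoint: densely defined linear operator with \<open>T* = T\<close>, i.e. the adjoint has the
same domain and acts as \<open>T\<close> on it.\<close>
definition self_adjoint_op :: "'a::chilbert_space set \<Rightarrow> ('a \<Rightarrow> 'a) \<Rightarrow> bool" where
  "self_adjoint_op D T \<longleftrightarrow> complex_subspace D \<and> closure D = UNIV \<and> clinear_on D T \<and>
     adjoint_domain D T = D \<and> (\<forall>x\<in>D. \<forall>y\<in>D. cinner (T x) y = cinner x (T y))"

definition bounded_op :: "('a::chilbert_space \<Rightarrow> 'a) \<Rightarrow> bool" where
  "bounded_op T \<longleftrightarrow> clinear_on UNIV T \<and> (\<exists>K. \<forall>x. norm (T x) \<le> K * norm x)"

definition nonneg_op :: "('a::chilbert_space \<Rightarrow> 'a) \<Rightarrow> bool" where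
  "nonneg_op T \<longleftrightarrow> (\<forall>x. 0 \<le> Re (cinner x (T x)) \<and> Im (cinner x (T x)) = 0)"

text \<open>Spectrum: \<open>\<lambda>\<close> is in the resolvent set iff \<open>T - \<lambda>\<close> maps \<open>D\<close> bijectively onto the
whole space with a bounded inverse.\<close>
definition op_spectrum :: "'a::chilbert_space set \<Rightarrow> ('a \<Rightarrow> 'a) \<Rightarrow> complex set" where
  "op_spectrum D T = {l. \<not> (bij_betw (\<lambda>x. T x - l *\<^sub>C x) D UNIV \<and>
       (\<exists>C. \<forall>x\<in>D. norm x \<le> C * norm (T x - l *\<^sub>C x)))}"

end

theory Submission
  imports Defs
begin


lemma scaleC_zero_left[simp]: "(0::complex) *\<^sub>C (x::'a::chilbert_space) = 0"
  using scaleC_of_real[of 0 x] by simp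

lemma scaleC_zero_right[simp]: "c *\<^sub>C (0::'a::chilbert_space) = 0"
  using scaleC_add_right[of c "0::'a" 0] by simp

lemma scaleC_minus1: "(-1::complex) *\<^sub>C (x::'a::chilbert_space) = - x"
  using scaleC_of_real[of "-1" x] by simp

lemma scaleC_minus_right: "c *\<^sub>C (- (x::'a::chilbert_space)) = - (c *\<^sub>C x)"
proof -
  have "c *\<^sub>C x + c *\<^sub>C (-x) = 0" using scaleC_add_right[of c x "-x"] by simp
  then show ?thesis by (simp add: add_eq_0_iff)
qed

lemma scaleC_minus_left: "(- c) *\<^sub>C (x::'a::chilbert_space) = - (c *\<^sub>C x)"
proof -
  have "c *\<^sub>C x + (- c) *\<^sub>C x = 0" using scaleC_add_left[of c "-c" x] by simp
  then show ?thesis by (simp add: add_eq_0_iff)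
qed

lemma scaleC_diff_right: "c *\<^sub>C ((x::'a::chilbert_space) - y) = c *\<^sub>C x - c *\<^sub>C y"
  using scaleC_add_right[of c x "-y"] scaleC_minus_right[of c y] by simp

lemma scaleC_diff_left: "(a - b) *\<^sub>C (x::'a::chilbert_space) = a *\<^sub>C x - b *\<^sub>C x"
  using scaleC_add_left[of a "-b" x] scaleC_minus_left[of b x] by simp

lemma scaleC_real: "complex_of_real r *\<^sub>C (x::'a::chilbert_space) = r *\<^sub>R x"
  by (rule scaleC_of_real)

lemma cinner_add_right: "cinner (x::'a::chilbert_space) (y + z) = cinner x y + cinner x z"
  by (metis cinner_add_left cinner_commute complex_cnj_add)

lemma cinner_scaleC_right: "cinner (x::'a::chilbert_space) (c *\<^sub>C y) = c * cinner x y"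
  by (metis cinner_scaleC_left cinner_commute complex_cnj_mult complex_cnj_cnj)

lemma cinner_zero_left[simp]: "cinner (0::'a::chilbert_space) y = 0"
  using cinner_add_left[of "0::'a" 0 y] by simp

lemma cinner_zero_right[simp]: "cinner (x::'a::chilbert_space) 0 = 0"
  using cinner_add_right[of x "0::'a" 0] by simp

lemma cinner_minus_left: "cinner (- (x::'a::chilbert_space)) y = - cinner x y"
proof -
  have "cinner x y + cinner (- x) y = 0" using cinner_add_left[of x "-x" y] by simp
  then show ?thesis by (simp add: add_eq_0_iff)
qed

lemma cinner_minus_right: "cinner (x::'a::chilbert_space) (- y) = - cinner x y"
proof -
  have "cinner x y + cinner x (- y) = 0" using cinner_add_right[of x y "-y"] by simp
  then show ?thesis by (simp add: add_eq_0_iff)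
qed

lemma cinner_diff_left: "cinner ((x::'a::chilbert_space) - y) z = cinner x z - cinner y z"
  using cinner_add_left[of x "-y" z] cinner_minus_left[of y z] by simp

lemma cinner_diff_right: "cinner (x::'a::chilbert_space) (y - z) = cinner x y - cinner x z"
  using cinner_add_right[of x y "-z"] cinner_minus_right[of x z] by simp

lemma cinner_scaleR_left: "cinner (r *\<^sub>R (x::'a::chilbert_space)) y = complex_of_real r * cinner x y"
  by (metis cinner_scaleC_left scaleC_of_real complex_cnj_complex_of_real)

lemma cinner_scaleR_right: "cinner (x::'a::chilbert_space) (r *\<^sub>R y) = complex_of_real r * cinner x y"
  by (metis cinner_scaleC_right scaleC_of_real)

lemma cinner_self_Im: "Im (cinner (x::'a::chilbert_space) x) = 0"
  by (metis cinner_commute cnj.sel(2) equation_minus_iff neg_equal_zero)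

lemma norm_sq_cinner: "(norm (x::'a::chilbert_space))\<^sup>2 = Re (cinner x x)"
  using norm_eq_sqrt_cinner[of x] cinner_self_nonneg[of x] by simp

lemma cinner_self: "cinner (x::'a::chilbert_space) x = complex_of_real ((norm x)\<^sup>2)"
  by (simp add: norm_sq_cinner complex_eq_iff cinner_self_Im)

lemma cmod_sq_aux: "cmod c * cmod c = Re c * Re c + Im c * Im c"
  by (metis cmod_power2 power2_eq_square)

lemma norm_scaleC: "norm (c *\<^sub>C (x::'a::chilbert_space)) = cmod c * norm x"
proof -
  have "(norm (c *\<^sub>C x))\<^sup>2 = Re (cnj c * c * cinner x x)"
    by (simp only: norm_sq_cinner cinner_scaleC_left cinner_scaleC_right ac_simps)
  also have "\<dots> = (cmod c * norm x)\<^sup>2"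
    unfolding cinner_self complex_mult_cnj[symmetric]
    by (simp add: power_mult_distrib del: of_real_power) (simp add: cmod_sq_aux power2_eq_square)
  finally show ?thesis
    by (metis norm_ge_zero power2_eq_imp_eq zero_le_mult_iff)
qed



lemma quad_aux:
  fixes a b s :: real
  assumes "a \<ge> 0" "b \<ge> 0" "s \<ge> 0" and q: "\<And>r. 0 \<le> a - 2 * r * s + r^2 * s * b"
  shows "s \<le> a * b"
proof (cases "s = 0")
  case True then show ?thesis using assms by simp
next
  case False
  then have sp: "s > 0" using assms by simp
  show ?thesis
  proof (cases "b = 0")
    case True
    have "0 \<le> a - 2 * ((a+1)/(2 * s)) * s" using q[of "(a+1)/(2 * s)"] True by simp
    also have "\<dots> = -1" using sp by (simp add: field_simps)
    finally show ?thesis by simp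
  next
    case False
    then have bp: "b > 0" using assms by simp
    have "0 \<le> a - 2 * (1/b) * s + (1/b)^2 * s * b" using q[of "1/b"] .
    also have "\<dots> = a - s/b" using bp by (simp add: field_simps power2_eq_square)
    finally have "s/b \<le> a" by simp
    then show ?thesis using bp by (simp add: field_simps mult.commute)
  qed
qed

lemma CS_op:
  fixes K :: "'a::chilbert_space \<Rightarrow> 'a"
  assumes lin: "clinear_on UNIV K" and sym: "\<And>u v. cinner (K u) v = cinner u (K v)"
    and pos: "\<And>u. 0 \<le> Re (cinner u (K u))"
  shows "(cmod (cinner u (K v)))\<^sup>2 \<le> Re (cinner u (K u)) * Re (cinner v (K v))"
proof -
  define z where "z = cinner u (K v)"
  have zc: "cinner v (K u) = cnj z"
    unfolding z_def by (metis sym cinner_commute)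
  have Kadd: "\<And>x y. K (x + y) = K x + K y" and Ksc: "\<And>c x. K (c *\<^sub>C x) = c *\<^sub>C K x"
    using lin unfolding clinear_on_def by auto
  have vreal: "cinner v (K v) = complex_of_real (Re (cinner v (K v)))"
    by (metis zc[of ] cinner_commute sym complex_is_Real_iff Reals_cnj_iff complex_cnj_cnj Re_complex_of_real
          of_real_Re)
  have "0 \<le> Re (cinner u (K u)) - 2*r*(cmod z)^2 + r^2*(cmod z)^2*Re (cinner v (K v))" for r :: real
  proof -
    define m where "m = - (complex_of_real r * cnj z)"
    have "cinner (u + m *\<^sub>C v) (K (u + m *\<^sub>C v)) =
        cinner u (K u) + m * z + cnj m * cnj z + cnj m * m * cinner v (K v)"
      unfolding Kadd Ksc cinner_add_left cinner_add_right cinner_scaleC_left cinner_scaleC_right zc z_def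
      by (simp add: algebra_simps)
    also have "\<dots> = cinner u (K u) - 2 * complex_of_real (r * (cmod z)^2)
        + complex_of_real (r^2 * (cmod z)^2 * Re (cinner v (K v)))"
    proof -
      have zz: "z * cnj z = complex_of_real ((cmod z)^2)" "cnj z * z = complex_of_real ((cmod z)^2)"
        by (metis complex_norm_square mult.commute)+
      have e1: "m * z = - complex_of_real (r * (cmod z)^2)"
        unfolding m_def by (simp add: mult.assoc zz)
      have e2: "cnj m * cnj z = - complex_of_real (r * (cmod z)^2)"
        unfolding m_def by (simp add: mult.assoc zz)
      have e3: "cnj m * m = complex_of_real (r^2 * (cmod z)^2)"
        unfolding m_def by (simp add: power2_eq_square mult.assoc mult.left_commute[of "cnj z"] zz)
      show ?thesis
        apply (subst vreal) unfolding e1 e2 e3 by (simp add: algebra_simps)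
    qed
    finally have "Re (cinner (u + m *\<^sub>C v) (K (u + m *\<^sub>C v))) =
       Re (cinner u (K u)) - 2*r*(cmod z)^2 + r^2*(cmod z)^2*Re (cinner v (K v))" by simp
    then show ?thesis using pos[of "u + m *\<^sub>C v"] by simp
  qed
  then have "(cmod z)^2 \<le> Re (cinner u (K u)) * Re (cinner v (K v))"
    by (intro quad_aux) (auto simp: pos)
  then show ?thesis by (simp add: z_def)
qed

lemma clinear_id: "clinear_on UNIV (\<lambda>x::'a::chilbert_space. x)"
  by (simp add: clinear_on_def)

lemma cinner_CS: "cmod (cinner (x::'a::chilbert_space) y) \<le> norm x * norm y"
proof -
  have "(cmod (cinner x y))\<^sup>2 \<le> (norm x * norm y)^2"
    using CS_op[OF clinear_id, of x y] by (simp add: norm_sq_cinner power_mult_distrib cinner_self_nonneg)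
  then show ?thesis by (meson abs_le_square_iff abs_norm_cancel power2_le_imp_le zero_le_mult_iff norm_ge_zero)
qed

lemma bounded_bilinear_cinner: "bounded_bilinear (cinner :: 'a::chilbert_space \<Rightarrow> 'a \<Rightarrow> complex)"
  apply (rule bounded_bilinear.intro)
  apply (simp_all add: cinner_add_left cinner_add_right cinner_scaleR_left cinner_scaleR_right scaleR_conv_of_real)
  apply (rule exI[of _ 1]) using cinner_CS by auto

lemmas tendsto_cinner = bounded_bilinear.tendsto[OF bounded_bilinear_cinner]



lemma cs_add: "complex_subspace D \<Longrightarrow> x \<in> D \<Longrightarrow> y \<in> D \<Longrightarrow> x + y \<in> D"
  unfolding complex_subspace_def by blast
lemma cs_scaleC: "complex_subspace D \<Longrightarrow> x \<in> D \<Longrightarrow> c *\<^sub>C x \<in> D"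
  unfolding complex_subspace_def by blast
lemma cs_zero: "complex_subspace D \<Longrightarrow> 0 \<in> D"
  unfolding complex_subspace_def by blast
lemma cs_diff: "complex_subspace D \<Longrightarrow> x \<in> D \<Longrightarrow> y \<in> D \<Longrightarrow> x - y \<in> D"
  using cs_add[of D x "(-1) *\<^sub>C y"] cs_scaleC[of D y "-1"] by (simp add: scaleC_minus1)
lemma cs_scaleR: "complex_subspace D \<Longrightarrow> x \<in> D \<Longrightarrow> r *\<^sub>R x \<in> D"
  using cs_scaleC[of D x "complex_of_real r"] by (simp add: scaleC_of_real)

lemma lin_add: "clinear_on D T \<Longrightarrow> x \<in> D \<Longrightarrow> y \<in> D \<Longrightarrow> T (x + y) = T x + T y"
  unfolding clinear_on_def by blast
lemma lin_scaleC: "clinear_on D T \<Longrightarrow> x \<in> D \<Longrightarrow> T (c *\<^sub>C x) = c *\<^sub>C T x"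
  unfolding clinear_on_def by blast
lemma lin_scaleR: "clinear_on D T \<Longrightarrow> x \<in> D \<Longrightarrow> T (r *\<^sub>R x) = r *\<^sub>R T x"
  using lin_scaleC[of D T x "complex_of_real r"] by (simp add: scaleC_of_real)
lemma lin_diff: "complex_subspace D \<Longrightarrow> clinear_on D T \<Longrightarrow> x \<in> D \<Longrightarrow> y \<in> D \<Longrightarrow> T (x - y) = T x - T y"
  using lin_add[of D T x "(-1) *\<^sub>C y"] lin_scaleC[of D T y "-1"] cs_scaleC[of D y "-1"]
  by (simp add: scaleC_minus1)
lemma lin_zero: "complex_subspace D \<Longrightarrow> clinear_on D T \<Longrightarrow> T 0 = 0"
  using lin_scaleC[of D T 0 0] cs_zero[of D] by simp

lemma scaleC_scaleR_commute: "c *\<^sub>C (r *\<^sub>R (x::'a::chilbert_space)) = r *\<^sub>R (c *\<^sub>C x)"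
  by (metis scaleC_of_real scaleC_scaleC mult.commute)

lemma bounded_linear_scaleC: "bounded_linear (\<lambda>x::'a::chilbert_space. c *\<^sub>C x)"
  apply (rule bounded_linear_intro[of _ "cmod c"])
  by (simp_all add: scaleC_add_right scaleC_scaleR_commute norm_scaleC)

lemma tendsto_scaleC: "(X \<longlongrightarrow> (x::'a::chilbert_space)) F \<Longrightarrow> ((\<lambda>n. c *\<^sub>C X n) \<longlongrightarrow> c *\<^sub>C x) F"
  by (rule bounded_linear.tendsto[OF bounded_linear_scaleC])

lemma sa_sym: "self_adjoint_op D S \<Longrightarrow> x \<in> D \<Longrightarrow> y \<in> D \<Longrightarrow> cinner (S x) y = cinner x (S y)"
  unfolding self_adjoint_op_def by blast

lemma sa_real: "self_adjoint_op D S \<Longrightarrow> x \<in> D \<Longrightarrow> Im (cinner x (S x)) = 0"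
  using sa_sym[of D S x x] cinner_commute[of "S x" x]
  by (metis cnj.sel(2) equation_minus_iff neg_equal_zero)

lemma sa_below:
  assumes sa: "self_adjoint_op D S" and x: "x \<in> D"
  shows "\<bar>Im l\<bar> * norm x \<le> norm (S x - l *\<^sub>C x)"
proof -
  have "cinner x (S x - l *\<^sub>C x) = cinner x (S x) - l * complex_of_real ((norm x)\<^sup>2)"
    by (simp add: cinner_diff_right cinner_scaleC_right cinner_self del: of_real_power)
  then have "Im (cinner x (S x - l *\<^sub>C x)) = - Im l * (norm x)\<^sup>2"
    using sa_real[OF sa x] by simp
  then have "\<bar>Im l\<bar> * (norm x)\<^sup>2 \<le> cmod (cinner x (S x - l *\<^sub>C x))"
    by (metis abs_Im_le_cmod abs_minus_cancel abs_mult abs_power2 mult_minus_left power2_abs)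
  also have "\<dots> \<le> norm x * norm (S x - l *\<^sub>C x)" by (rule cinner_CS)
  finally have h: "norm x * (\<bar>Im l\<bar> * norm x) \<le> norm x * norm (S x - l *\<^sub>C x)"
    by (simp add: power2_eq_square algebra_simps)
  show ?thesis
  proof (cases "norm x = 0")
    case True then show ?thesis by simp
  next
    case False then show ?thesis using h by (simp add: mult_le_cancel_left)
  qed
qed

lemma dense_orth:
  assumes cl: "closure D = UNIV" and orth: "\<And>w. w \<in> D \<Longrightarrow> cinner w v = 0"
  shows "v = (0::'a::chilbert_space)"
proof -
  have "v \<in> closure D" using cl by simp
  then obtain X where X: "\<And>n. X n \<in> D" "X \<longlonglongrightarrow> v" by (meson closure_sequential)
  have "(\<lambda>n. cinner (X n) v) \<longlonglongrightarrow> cinner v v"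
    by (rule tendsto_cinner[OF X(2) tendsto_const])
  moreover have "(\<lambda>n. cinner (X n) v) = (\<lambda>n. 0)" using orth X(1) by auto
  ultimately have "cinner v v = 0" using LIMSEQ_unique tendsto_const by metis
  then show ?thesis using cinner_self_eq_zero by blast
qed

lemma sa_closed:
  assumes sa: "self_adjoint_op D S" and X: "\<And>n. X n \<in> D" and lx: "X \<longlonglongrightarrow> x"
    and lw: "(\<lambda>n. S (X n)) \<longlonglongrightarrow> w"
  shows "x \<in> D \<and> S x = w"
proof -
  have key: "cinner (S u) x = cinner u w" if u: "u \<in> D" for u
  proof -
    have "(\<lambda>n. cinner (S u) (X n)) \<longlonglongrightarrow> cinner (S u) x"
      by (rule tendsto_cinner[OF tendsto_const lx])
    moreover have "(\<lambda>n. cinner (S u) (X n)) = (\<lambda>n. cinner u (S (X n)))"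
      using sa_sym[OF sa u X] by auto
    moreover have "(\<lambda>n. cinner u (S (X n))) \<longlonglongrightarrow> cinner u w"
      by (rule tendsto_cinner[OF tendsto_const lw])
    ultimately show ?thesis using LIMSEQ_unique by metis
  qed
  have "x \<in> adjoint_domain D S" unfolding adjoint_domain_def using key by blast
  then have xD: "x \<in> D" using sa unfolding self_adjoint_op_def by blast
  have "cinner u (S x - w) = 0" if u: "u \<in> D" for u
    using key[OF u] sa_sym[OF sa u xD] by (simp add: cinner_diff_right)
  then have "S x - w = 0" using dense_orth[of D "S x - w"] sa unfolding self_adjoint_op_def by blast
  then show ?thesis using xD by simp
qed

lemma norm_add_sq: "(norm ((y::'a::chilbert_space) + v))\<^sup>2 = (norm y)\<^sup>2 + 2 * Re (cinner y v) + (norm v)\<^sup>2"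
proof -
  have "Re (cinner v y) = Re (cinner y v)" by (metis cinner_commute complex_cnj_cnj cnj.sel(1))
  then show ?thesis by (simp add: norm_sq_cinner cinner_add_left cinner_add_right)
qed

lemma norm_diff_sq: "(norm ((y::'a::chilbert_space) - v))\<^sup>2 = (norm y)\<^sup>2 - 2 * Re (cinner y v) + (norm v)\<^sup>2"
  using norm_add_sq[of y "-v"] by (simp add: cinner_minus_right)

lemma parallelogram: "(norm ((a::'a::chilbert_space) + b))\<^sup>2 + (norm (a - b))\<^sup>2 = 2 * (norm a)\<^sup>2 + 2 * (norm b)\<^sup>2"
  by (simp add: norm_add_sq norm_diff_sq)

lemma orth_from_min:
  assumes min: "\<And>\<mu>. norm (y::'a::chilbert_space) \<le> norm (y + \<mu> *\<^sub>C v)"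
  shows "cinner y v = 0"
proof -
  define g where "g = cinner y v"
  have "0 \<le> 0 - 2 * r * (cmod g)^2 + r^2 * (cmod g)^2 * (norm v)^2" for r :: real
  proof -
    define m where "m = - (complex_of_real r * cnj g)"
    have zz: "cnj g * g = complex_of_real ((cmod g)^2)"
      by (metis complex_norm_square mult.commute)
    have "Re (m * g) = - r * (cmod g)^2"
      unfolding m_def by (simp add: mult.assoc zz del: of_real_power)
    moreover have "(cmod m)^2 = r^2 * (cmod g)^2"
      unfolding m_def by (simp add: norm_mult power_mult_distrib)
    moreover have "(norm (y + m *\<^sub>C v))\<^sup>2 = (norm y)\<^sup>2 + 2 * Re (m * g) + (cmod m)^2 * (norm v)\<^sup>2"
      by (simp add: norm_add_sq cinner_scaleC_right norm_scaleC power_mult_distrib g_def)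
    moreover have "(norm y)\<^sup>2 \<le> (norm (y + m *\<^sub>C v))\<^sup>2"
      using min[of m] by (simp add: power_mono)
    ultimately show ?thesis by simp
  qed
  then have "(cmod g)^2 \<le> 0 * (norm v)^2" by (intro quad_aux) auto
  then show ?thesis by (simp add: g_def)
qed

lemma cauchy_aux:
  assumes K: "K \<ge> 0" and b: "\<And>m n. (norm (Y m - Y n))\<^sup>2 \<le> K * (1 / Suc m + 1 / Suc n)"
  shows "Cauchy (Y :: nat \<Rightarrow> 'a::real_normed_vector)"
proof (rule CauchyI)
  fix e :: real assume e: "e > 0"
  obtain M :: nat where M: "2 * K / e^2 < M" using reals_Archimedean2 by blast
  have Mp: "2 * K / real (Suc M) < e^2"
  proof -
    have "2 * K < M * e^2" using M e by (simp add: field_simps)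
    also have "\<dots> \<le> real (Suc M) * e^2" using e by (simp add: mult_right_mono)
    finally show ?thesis by (simp add: field_simps)
  qed
  show "\<exists>M. \<forall>m\<ge>M. \<forall>n\<ge>M. norm (Y m - Y n) < e"
  proof (intro exI allI impI)
    fix m n assume mn: "M \<le> m" "M \<le> n"
    have "1 / real (Suc m) \<le> 1 / real (Suc M)" using mn by (simp add: frac_le)
    moreover have "1 / real (Suc n) \<le> 1 / real (Suc M)" using mn by (simp add: frac_le)
    ultimately have "K * (1 / Suc m + 1 / Suc n) \<le> K * (2 / Suc M)"
      using K by (intro mult_left_mono) auto
    moreover have "K * (2 / real (Suc M)) = 2 * K / real (Suc M)" by simp
    ultimately have "(norm (Y m - Y n))\<^sup>2 < e^2" using b[of m n] Mp by linarith
    then show "norm (Y m - Y n) < e" using e by (simp add: power_less_imp_less_base)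
  qed
qed



lemma sa_surj:
  assumes sa: "self_adjoint_op D S" and l: "Im l \<noteq> 0"
  shows "\<exists>x\<in>D. S x - l *\<^sub>C x = z"
proof -
  have cs: "complex_subspace D" and lin: "clinear_on D S" and adj: "adjoint_domain D S = D"
    using sa unfolding self_adjoint_op_def by auto
  define T where "T x = S x - l *\<^sub>C x" for x
  have Tdiff: "T (x - y) = T x - T y" if "x \<in> D" "y \<in> D" for x y
    using that by (simp add: T_def lin_diff[OF cs lin] scaleC_diff_right)
  have Tadd: "T (x + y) = T x + T y" if "x \<in> D" "y \<in> D" for x y
    using that by (simp add: T_def lin_add[OF lin] scaleC_add_right)
  have TscR: "T (r *\<^sub>R x) = r *\<^sub>R T x" if "x \<in> D" for x r
    using that by (simp add: T_def lin_scaleR[OF lin] scaleC_scaleR_commute scaleR_diff_right)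
  have TscC: "T (c *\<^sub>C x) = c *\<^sub>C T x" if "x \<in> D" for x c
    using that by (simp add: T_def lin_scaleC[OF lin] scaleC_scaleC scaleC_diff_right mult.commute)
  have below: "\<bar>Im l\<bar> * norm x \<le> norm (T x)" if "x \<in> D" for x
    unfolding T_def by (rule sa_below[OF sa that])
  define N where "N = (\<lambda>x. norm (T x - z)) ` D"
  have N_ne: "N \<noteq> {}" using cs_zero[OF cs] unfolding N_def by blast
  have bdd: "bdd_below N" unfolding N_def by (rule bdd_belowI[of _ 0]) auto
  define \<delta> where "\<delta> = Inf N"
  have \<delta>_le: "\<delta> \<le> norm (T x - z)" if "x \<in> D" for x
    unfolding \<delta>_def using that by (intro cInf_lower bdd) (auto simp: N_def)
  have \<delta>0: "0 \<le> \<delta>" unfolding \<delta>_def using N_ne by (intro cInf_greatest) (auto simp: N_def)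
  have "\<exists>x. x \<in> D \<and> (norm (T x - z))\<^sup>2 < \<delta>\<^sup>2 + 1 / real (Suc n)" for n
  proof -
    have "\<delta> < sqrt (\<delta>\<^sup>2 + 1 / real (Suc n))"
      by (rule real_less_rsqrt) simp
    then obtain a where "a \<in> N" "a < sqrt (\<delta>\<^sup>2 + 1 / real (Suc n))"
      using cInf_lessD[OF N_ne] unfolding \<delta>_def by blast
    then obtain x where x: "x \<in> D" "norm (T x - z) < sqrt (\<delta>\<^sup>2 + 1 / real (Suc n))"
      unfolding N_def by blast
    have "(norm (T x - z))\<^sup>2 < (sqrt (\<delta>\<^sup>2 + 1 / real (Suc n)))\<^sup>2"
      by (rule power_strict_mono[OF x(2)]) auto
    also have "\<dots> = \<delta>\<^sup>2 + 1 / real (Suc n)" by (simp add: add_nonneg_nonneg)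
    finally show ?thesis using x(1) by blast
  qed
  then obtain X where X: "\<And>n. X n \<in> D" "\<And>n. (norm (T (X n) - z))\<^sup>2 < \<delta>\<^sup>2 + 1 / real (Suc n)"
    by metis
  have par: "(norm (T (X m) - T (X n)))\<^sup>2 \<le> 2 * (1 / real (Suc m) + 1 / real (Suc n))" for m n
  proof -
    define a where "a = T (X m) - z"
    define b where "b = T (X n) - z"
    define mid where "mid = (1/2::real) *\<^sub>R (X m + X n)"
    have midD: "mid \<in> D" unfolding mid_def using X(1) cs by (intro cs_scaleR cs_add) auto
    have "T mid = (1/2::real) *\<^sub>R (T (X m) + T (X n))"
      unfolding mid_def using X(1) cs by (simp add: TscR Tadd cs_add)
    then have "a + b = 2 *\<^sub>R (T mid - z)"
      unfolding a_def b_def by (simp add: scaleR_right_diff_distrib scaleR_right_distrib scaleR_2)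
    then have "norm (a + b) = 2 * norm (T mid - z)" by simp
    then have "2 * \<delta> \<le> norm (a + b)" using \<delta>_le[OF midD] by simp
    then have "(2 * \<delta>)\<^sup>2 \<le> (norm (a + b))\<^sup>2" using \<delta>0 by (intro power_mono) auto
    moreover have "(norm (a + b))\<^sup>2 + (norm (a - b))\<^sup>2 = 2 * (norm a)\<^sup>2 + 2 * (norm b)\<^sup>2"
      by (rule parallelogram)
    moreover have "a - b = T (X m) - T (X n)" unfolding a_def b_def by simp
    ultimately show ?thesis using X(2)[of m] X(2)[of n] unfolding a_def b_def
      by (simp add: power_mult_distrib algebra_simps)
  qed
  have cT: "Cauchy (\<lambda>n. T (X n))"
    by (rule cauchy_aux[of 2]) (use par in auto)
  have cX: "Cauchy X"
  proof (rule cauchy_aux[of "2 / (Im l)\<^sup>2"])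
    show "0 \<le> 2 / (Im l)\<^sup>2" by simp
    fix m n
    have "\<bar>Im l\<bar> * norm (X m - X n) \<le> norm (T (X m) - T (X n))"
      using below[of "X m - X n"] Tdiff[OF X(1) X(1)] cs_diff[OF cs X(1) X(1)] by simp
    then have "(\<bar>Im l\<bar> * norm (X m - X n))\<^sup>2 \<le> (norm (T (X m) - T (X n)))\<^sup>2"
      by (intro power_mono) auto
    then have "(Im l)\<^sup>2 * (norm (X m - X n))\<^sup>2 \<le> 2 * (1 / real (Suc m) + 1 / real (Suc n))"
      using par[of m n] by (simp add: power_mult_distrib)
    moreover have pos: "(Im l)\<^sup>2 > 0" using l by simp
    ultimately have "(norm (X m - X n))\<^sup>2 * (Im l)\<^sup>2 \<le> 2 * (1 / real (Suc m) + 1 / real (Suc n))"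
      by (simp only: mult.commute)
    then have "(norm (X m - X n))\<^sup>2 \<le> (2 * (1 / real (Suc m) + 1 / real (Suc n))) / (Im l)\<^sup>2"
      by (rule pos_le_divide_eq[OF pos, THEN iffD2])
    then show "(norm (X m - X n))\<^sup>2 \<le> 2 / (Im l)\<^sup>2 * (1 / real (Suc m) + 1 / real (Suc n))"
      by (simp only: times_divide_eq_left)
  qed
  obtain x where lx: "X \<longlonglongrightarrow> x" using cX Cauchy_convergent_iff convergent_def by blast
  obtain w where lw: "(\<lambda>n. T (X n)) \<longlonglongrightarrow> w" using cT Cauchy_convergent_iff convergent_def by blast
  have "(\<lambda>n. T (X n) + l *\<^sub>C X n) \<longlonglongrightarrow> w + l *\<^sub>C x"
    by (intro tendsto_add lw tendsto_scaleC lx)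
  moreover have "(\<lambda>n. T (X n) + l *\<^sub>C X n) = (\<lambda>n. S (X n))" by (simp add: T_def)
  ultimately have "x \<in> D \<and> S x = w + l *\<^sub>C x" using sa_closed[OF sa X(1) lx] by simp
  then have xD: "x \<in> D" and Tx: "T x = w" by (auto simp: T_def)
  have "(\<lambda>n. (norm (T (X n) - z))\<^sup>2) \<longlonglongrightarrow> (norm (w - z))\<^sup>2"
    by (intro tendsto_intros lw)
  moreover have "(\<lambda>n. \<delta>\<^sup>2 + 1 / real (Suc n)) \<longlonglongrightarrow> \<delta>\<^sup>2 + 0"
    using LIMSEQ_inverse_real_of_nat by (intro tendsto_add tendsto_const) (simp add: inverse_eq_divide)
  ultimately have "(norm (w - z))\<^sup>2 \<le> \<delta>\<^sup>2 + 0"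
    using X(2) by (intro tendsto_le[OF sequentially_bot]) (auto intro: always_eventually less_imp_le)
  then have "(norm (T x - z))\<^sup>2 \<le> \<delta>\<^sup>2" using Tx by simp
  then have ymin0: "norm (T x - z) \<le> \<delta>" using \<delta>0 by (rule power2_le_imp_le)
  define y where "y = T x - z"
  have orth: "cinner y (T u) = 0" if u: "u \<in> D" for u
  proof (rule orth_from_min)
    fix \<mu>
    have "x + \<mu> *\<^sub>C u \<in> D" using cs xD u by (intro cs_add cs_scaleC)
    then have "\<delta> \<le> norm (T (x + \<mu> *\<^sub>C u) - z)" by (rule \<delta>_le)
    also have "T (x + \<mu> *\<^sub>C u) - z = y + \<mu> *\<^sub>C T u"
      using cs xD u by (simp add: Tadd cs_scaleC TscC y_def algebra_simps)
    finally show "norm y \<le> norm (y + \<mu> *\<^sub>C T u)" using ymin0 y_def by simp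
  qed
  have adjy: "cinner (S u) y = cinner u (cnj l *\<^sub>C y)" if u: "u \<in> D" for u
  proof -
    have "cinner (T u) y = 0" using orth[OF u] cinner_commute[of "T u" y] by simp
    then show ?thesis
      by (simp add: T_def cinner_diff_left cinner_scaleC_left cinner_scaleC_right)
  qed
  have "y \<in> adjoint_domain D S" unfolding adjoint_domain_def using adjy by blast
  then have yD: "y \<in> D" using adj by simp
  have "cinner u (S y - cnj l *\<^sub>C y) = 0" if u: "u \<in> D" for u
    using adjy[OF u] sa_sym[OF sa u yD] by (simp add: cinner_diff_right)
  then have "S y - cnj l *\<^sub>C y = 0"
    using dense_orth[of D] sa unfolding self_adjoint_op_def by blast
  then have "\<bar>Im (cnj l)\<bar> * norm y \<le> 0" using sa_below[OF sa yD, of "cnj l"] by simp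
  then have "y = 0" using l by (simp add: mult_le_0_iff)
  then show ?thesis using xD unfolding y_def T_def by auto
qed

lemma sa_spectrum_real:
  assumes sa: "self_adjoint_op D S"
  shows "op_spectrum D S \<subseteq> \<real>"
proof
  fix l assume lS: "l \<in> op_spectrum D S"
  show "l \<in> \<real>"
  proof (rule ccontr)
    assume "l \<notin> \<real>"
    then have l: "Im l \<noteq> 0" using complex_is_Real_iff by blast
    have cs: "complex_subspace D" and lin: "clinear_on D S"
      using sa unfolding self_adjoint_op_def by auto
    have inj: "inj_on (\<lambda>x. S x - l *\<^sub>C x) D"
    proof (rule inj_onI)
      fix x y assume xy: "x \<in> D" "y \<in> D" "S x - l *\<^sub>C x = S y - l *\<^sub>C y"
      have "S (x - y) - l *\<^sub>C (x - y) = 0"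
        using xy by (simp add: lin_diff[OF cs lin] scaleC_diff_right algebra_simps)
      then have "\<bar>Im l\<bar> * norm (x - y) \<le> 0"
        using sa_below[OF sa cs_diff[OF cs xy(1,2)], of l] by simp
      then show "x = y" using l by (simp add: mult_le_0_iff)
    qed
    have "z \<in> (\<lambda>x. S x - l *\<^sub>C x) ` D" for z
    proof -
      obtain x where "x \<in> D" "S x - l *\<^sub>C x = z" using sa_surj[OF sa l] by blast
      then show ?thesis by blast
    qed
    then have "(\<lambda>x. S x - l *\<^sub>C x) ` D = UNIV" by blast
    then have "bij_betw (\<lambda>x. S x - l *\<^sub>C x) D UNIV" using inj by (simp add: bij_betw_def)
    moreover have "\<forall>x\<in>D. norm x \<le> (1 / \<bar>Im l\<bar>) * norm (S x - l *\<^sub>C x)"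
      using sa_below[OF sa, of _ l] l by (simp add: field_simps)
    ultimately show False using lS unfolding op_spectrum_def by blast
  qed
qed

lemma sa_perturb:
  assumes sa: "self_adjoint_op D A" and bB: "bounded_op B"
    and symB: "\<And>x y. cinner (B x) y = cinner x (B y)"
  shows "self_adjoint_op D (\<lambda>x. A x + t *\<^sub>R B x)"
proof -
  have cs: "complex_subspace D" and linA: "clinear_on D A" and cl: "closure D = UNIV"
    and adj: "adjoint_domain D A = D"
    using sa unfolding self_adjoint_op_def by auto
  have linB: "clinear_on UNIV B" using bB unfolding bounded_op_def by auto
  have lin: "clinear_on D (\<lambda>x. A x + t *\<^sub>R B x)"
    unfolding clinear_on_def
    using linA linB
    by (auto simp: lin_add lin_scaleC scaleR_add_right scaleC_add_right scaleC_scaleR_commute)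
  have e: "cinner (A x + t *\<^sub>R B x) y = cinner (A x) y + cinner x (t *\<^sub>R B y)" for x y
    by (simp add: cinner_add_left cinner_scaleR_left cinner_scaleR_right symB)
  have "adjoint_domain D (\<lambda>x. A x + t *\<^sub>R B x) = adjoint_domain D A"
  proof (rule set_eqI)
    fix y
    show "y \<in> adjoint_domain D (\<lambda>x. A x + t *\<^sub>R B x) \<longleftrightarrow> y \<in> adjoint_domain D A"
    proof
      assume "y \<in> adjoint_domain D (\<lambda>x. A x + t *\<^sub>R B x)"
      then obtain z where z: "\<forall>x\<in>D. cinner (A x + t *\<^sub>R B x) y = cinner x z"
        unfolding adjoint_domain_def by blast
      have "\<forall>x\<in>D. cinner (A x) y = cinner x (z - t *\<^sub>R B y)"
        using z by (simp add: e cinner_diff_right algebra_simps)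
      then show "y \<in> adjoint_domain D A" unfolding adjoint_domain_def by blast
    next
      assume "y \<in> adjoint_domain D A"
      then obtain z where z: "\<forall>x\<in>D. cinner (A x) y = cinner x z"
        unfolding adjoint_domain_def by blast
      have "\<forall>x\<in>D. cinner (A x + t *\<^sub>R B x) y = cinner x (z + t *\<^sub>R B y)"
        using z by (simp add: e cinner_add_right)
      then show "y \<in> adjoint_domain D (\<lambda>x. A x + t *\<^sub>R B x)" unfolding adjoint_domain_def by blast
    qed
  qed
  moreover have "\<forall>x\<in>D. \<forall>y\<in>D. cinner (A x + t *\<^sub>R B x) y = cinner x (A y + t *\<^sub>R B y)"
    using sa_sym[OF sa] by (simp add: e cinner_add_right)
  ultimately show ?thesis using cs cl lin adj unfolding self_adjoint_op_def by simp
qed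



lemma resolvent:
  assumes sa: "self_adjoint_op D A" and nc: "complex_of_real c \<notin> op_spectrum D A"
  obtains R C where "\<And>u. R u \<in> D" "\<And>u. A (R u) - complex_of_real c *\<^sub>C R u = u"
    "\<And>u. norm (R u) \<le> C * norm u" "C \<ge> 0"
    "\<And>x. x \<in> D \<Longrightarrow> A x - complex_of_real c *\<^sub>C x = 0 \<Longrightarrow> x = 0"
    "clinear_on UNIV R" "\<And>u v. cinner (R u) v = cinner u (R v)"
proof -
  have cs: "complex_subspace D" and lin: "clinear_on D A"
    using sa unfolding self_adjoint_op_def by auto
  define L where "L x = A x - complex_of_real c *\<^sub>C x" for x
  have Ldiff: "L (x - y) = L x - L y" if "x \<in> D" "y \<in> D" for x y
    using that by (simp add: L_def lin_diff[OF cs lin] scaleC_diff_right)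
  have Ladd: "L (x + y) = L x + L y" if "x \<in> D" "y \<in> D" for x y
    using that by (simp add: L_def lin_add[OF lin] scaleC_add_right)
  have LscC: "L (a *\<^sub>C x) = a *\<^sub>C L x" if "x \<in> D" for x a
    using that by (simp add: L_def lin_scaleC[OF lin] scaleC_scaleC scaleC_diff_right mult.commute)
  from nc obtain C0 where bij: "bij_betw L D UNIV" and C0: "\<forall>x\<in>D. norm x \<le> C0 * norm (L x)"
    unfolding op_spectrum_def L_def by blast
  define C where "C = max C0 0"
  have Cb: "norm x \<le> C * norm (L x)" if "x \<in> D" for x
  proof -
    have "C0 * norm (L x) \<le> C * norm (L x)" unfolding C_def by (intro mult_right_mono) auto
    then show ?thesis using C0 that by force
  qed
  have C0': "C \<ge> 0" unfolding C_def by simp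
  have ex: "\<exists>x. x \<in> D \<and> L x = u" for u
    using bij unfolding bij_betw_def by (metis UNIV_I imageE)
  define R where "R u = (SOME x. x \<in> D \<and> L x = u)" for u
  have R: "R u \<in> D \<and> L (R u) = u" for u
    unfolding R_def by (rule someI_ex[OF ex])
  have inj0: "x = 0" if "x \<in> D" "L x = 0" for x
    using Cb[OF that(1)] that(2) by simp
  have inj: "x = y" if "x \<in> D" "y \<in> D" "L x = L y" for x y
    using inj0[OF cs_diff[OF cs that(1,2)]] Ldiff[OF that(1,2)] that(3) by simp
  have linR: "clinear_on UNIV R"
    unfolding clinear_on_def
  proof (intro conjI ballI allI)
    fix u v
    show "R (u + v) = R u + R v"
    proof (rule inj)
      show "R (u+v) \<in> D" using R by blast
      show "R u + R v \<in> D" using R cs_add[OF cs] by blast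
      show "L (R (u+v)) = L (R u + R v)" using R Ladd by metis
    qed
  next
    fix a u
    show "R (a *\<^sub>C u) = a *\<^sub>C R u"
    proof (rule inj)
      show "R (a *\<^sub>C u) \<in> D" using R by blast
      show "a *\<^sub>C R u \<in> D" using R cs_scaleC[OF cs] by blast
      show "L (R (a *\<^sub>C u)) = L (a *\<^sub>C R u)" using R LscC by metis
    qed
  qed
  have symR: "cinner (R u) v = cinner u (R v)" for u v
  proof -
    have "cinner (R u) v = cinner (R u) (L (R v))" using R[of v] by simp
    also have "\<dots> = cinner (A (R u)) (R v) - complex_of_real c * cinner (R u) (R v)"
      using sa_sym[OF sa R[THEN conjunct1, of u] R[THEN conjunct1, of v]]
      by (simp add: L_def cinner_diff_right cinner_scaleC_right)
    also have "\<dots> = cinner (L (R u)) (R v)"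
      by (simp add: L_def cinner_diff_left cinner_scaleC_left)
    also have "\<dots> = cinner u (R v)" using R[of u] by simp
    finally show ?thesis .
  qed
  show ?thesis
  proof (rule that[of R C])
    show "\<And>u. R u \<in> D" using R by blast
    show "\<And>u. A (R u) - complex_of_real c *\<^sub>C R u = u" using R unfolding L_def by blast
    show "\<And>u. norm (R u) \<le> C * norm u" using R Cb by metis
    show "C \<ge> 0" by (rule C0')
    show "\<And>x. x \<in> D \<Longrightarrow> A x - complex_of_real c *\<^sub>C x = 0 \<Longrightarrow> x = 0" using inj0 unfolding L_def by blast
    show "clinear_on UNIV R" by (rule linR)
    show "\<And>u v. cinner (R u) v = cinner u (R v)" by (rule symR)
  qed
qed

lemma two_point:
  fixes z :: "'a::chilbert_space"
  assumes sa: "self_adjoint_op D A"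
    and R1D: "\<And>u. R1 u \<in> D" and R1eq: "\<And>u. A (R1 u) - complex_of_real c *\<^sub>C R1 u = u"
    and R1b: "\<And>u. norm (R1 u) \<le> C1 * norm u" and C1: "C1 \<ge> 0"
    and inj1: "\<And>x. x \<in> D \<Longrightarrow> A x - complex_of_real c *\<^sub>C x = 0 \<Longrightarrow> x = 0"
    and lin1: "clinear_on UNIV R1" and sym1: "\<And>u v. cinner (R1 u) v = cinner u (R1 v)"
    and R2D: "\<And>u. R2 u \<in> D" and R2eq: "\<And>u. A (R2 u) - complex_of_real d *\<^sub>C R2 u = u"
    and cd: "c \<noteq> d" and small: "\<bar>c - d\<bar> * C1 \<le> 1"
    and h1: "cinner z (R1 z) = 0" and h2: "cinner z (R2 z) = 0"
  shows "z = 0"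
proof -
  have cs: "complex_subspace D" and lin: "clinear_on D A"
    using sa unfolding self_adjoint_op_def by auto
  define L where "L x = A x - complex_of_real c *\<^sub>C x" for x
  have Ldiff: "L (x - y) = L x - L y" if "x \<in> D" "y \<in> D" for x y
    using that by (simp add: L_def lin_diff[OF cs lin] scaleC_diff_right)
  have LscR: "L (r *\<^sub>R x) = r *\<^sub>R L x" if "x \<in> D" for x r
    using that by (simp add: L_def lin_scaleR[OF lin] scaleC_scaleR_commute scaleR_diff_right)
  have e1: "L (R1 z - R2 z) = (c - d) *\<^sub>R R2 z"
  proof -
    have "L (R2 z) = A (R2 z) - complex_of_real d *\<^sub>C R2 z + (d - c) *\<^sub>R R2 z"
      unfolding L_def scaleC_of_real[symmetric] by (simp add: scaleC_diff_left)
    then have L2: "L (R2 z) = z + (d - c) *\<^sub>R R2 z" using R2eq by simp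
    have L1: "L (R1 z) = z" unfolding L_def by (rule R1eq)
    have "L (R1 z - R2 z) = L (R1 z) - L (R2 z)" by (rule Ldiff[OF R1D R2D])
    also have "\<dots> = z - (z + (d - c) *\<^sub>R R2 z)" by (simp only: L1 L2)
    also have "\<dots> = (c - d) *\<^sub>R R2 z" by (simp add: scaleR_diff_left algebra_simps)
    finally show ?thesis .
  qed
  have e2: "L ((c - d) *\<^sub>R R1 (R2 z)) = (c - d) *\<^sub>R R2 z"
    using LscR[OF R1D] R1eq unfolding L_def[symmetric] by simp
  have res: "R1 z - R2 z = (c - d) *\<^sub>R R1 (R2 z)"
  proof -
    have "L ((R1 z - R2 z) - (c - d) *\<^sub>R R1 (R2 z)) = 0"
      using e1 e2 Ldiff[OF cs_diff[OF cs R1D R2D] cs_scaleR[OF cs R1D]] by simp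
    then have "(R1 z - R2 z) - (c - d) *\<^sub>R R1 (R2 z) = 0"
      using inj1[OF cs_diff[OF cs cs_diff[OF cs R1D R2D] cs_scaleR[OF cs R1D]]] unfolding L_def by blast
    then show ?thesis by simp
  qed
  have "cinner z (R1 z - R2 z) = 0" using h1 h2 by (simp add: cinner_diff_right)
  then have "complex_of_real (c - d) * cinner z (R1 (R2 z)) = 0"
    unfolding res by (simp add: cinner_scaleR_right)
  then have "cinner z (R1 (R2 z)) = 0" using cd by simp
  then have orth: "cinner (R1 z) (R2 z) = 0" using sym1 by simp
  define w1 where "w1 = R1 z"
  define w2 where "w2 = R2 z"
  have "(norm (w1 - w2))\<^sup>2 = (norm w1)\<^sup>2 + (norm w2)\<^sup>2"
    using orth unfolding w1_def w2_def by (simp add: norm_diff_sq)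
  moreover have "norm (w1 - w2) \<le> \<bar>c - d\<bar> * C1 * norm w2"
  proof -
    have "norm (w1 - w2) = \<bar>c - d\<bar> * norm (R1 w2)" unfolding w1_def w2_def res by simp
    also have "\<dots> \<le> \<bar>c - d\<bar> * (C1 * norm w2)" by (intro mult_left_mono R1b) auto
    finally show ?thesis by (simp add: mult.assoc)
  qed
  moreover have "\<bar>c - d\<bar> * C1 * norm w2 \<le> norm w2"
    using small mult_right_mono[OF small norm_ge_zero[of w2]] by simp
  ultimately have "(norm w1)\<^sup>2 + (norm w2)\<^sup>2 \<le> (norm w2)\<^sup>2"
    by (metis dual_order.trans norm_ge_zero power_mono)
  then have "w1 = 0" by simp
  then have "z = A 0 - complex_of_real c *\<^sub>C 0" using R1eq[of z] unfolding w1_def by simp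
  then show ?thesis using lin_zero[OF cs lin] by simp
qed

lemma pos_op_bound:
  fixes K :: "'a::chilbert_space \<Rightarrow> 'a"
  assumes lin: "clinear_on UNIV K" and sym: "\<And>u v. cinner (K u) v = cinner u (K v)"
    and pos: "\<And>u. 0 \<le> Re (cinner u (K u))" and M: "M \<ge> 0" and bd: "\<And>x. norm (K x) \<le> M * norm x"
  shows "(norm (K x))\<^sup>2 \<le> M * Re (cinner x (K x))"
proof (cases "norm (K x) = 0")
  case True then show ?thesis using M pos[of x] by simp
next
  case False
  have "cinner x (K (K x)) = complex_of_real ((norm (K x))\<^sup>2)"
    using sym[of x "K x"] cinner_self[of "K x"] by (simp del: of_real_power)
  then have "cmod (cinner x (K (K x))) = (norm (K x))\<^sup>2" by (simp only: norm_of_real) simp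
  then have "((norm (K x))\<^sup>2)\<^sup>2 \<le> Re (cinner x (K x)) * Re (cinner (K x) (K (K x)))"
    using CS_op[OF lin sym pos, of x "K x"] by simp
  also have "Re (cinner (K x) (K (K x))) \<le> M * (norm (K x))\<^sup>2"
  proof -
    have "Re (cinner (K x) (K (K x))) \<le> cmod (cinner (K x) (K (K x)))" by (rule complex_Re_le_cmod)
    also have "\<dots> \<le> norm (K x) * norm (K (K x))" by (rule cinner_CS)
    also have "\<dots> \<le> norm (K x) * (M * norm (K x))" by (intro mult_left_mono bd) auto
    finally show ?thesis by (simp add: power2_eq_square algebra_simps)
  qed
  then have "Re (cinner x (K x)) * Re (cinner (K x) (K (K x))) \<le> Re (cinner x (K x)) * (M * (norm (K x))\<^sup>2)"
    using pos[of x] by (intro mult_left_mono) auto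
  finally have "(norm (K x))\<^sup>2 * (norm (K x))\<^sup>2 \<le> (M * Re (cinner x (K x))) * (norm (K x))\<^sup>2"
    by (simp add: power2_eq_square algebra_simps)
  then show ?thesis by (rule mult_right_le_imp_le) (use False in auto)
qed



lemma arith_contra:
  fixes M P N G KB KQ C1 e :: real
  assumes M: "M > 0" and P: "P > 0" and KB: "KB > 0" and KQ: "KQ > 0" and C1: "C1 > 0"
    and e: "e \<le> M^4 / (8 * KB * KQ * C1^2)"
    and h7: "(M/2)^2 * P \<le> KB * N^2"
    and h3: "G^2 \<le> KQ * e * P"
    and h8: "N \<le> C1 * (G / M)" and N: "N \<ge> 0" and G: "G \<ge> 0"
  shows False
proof -
  have "N^2 \<le> (C1 * (G / M))^2" using h8 N by (intro power_mono) auto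
  also have "(C1 * (G / M))^2 = C1^2 * G^2 / M^2" by (simp add: power_divide power_mult_distrib)
  also have "C1^2 * G^2 / M^2 \<le> C1^2 * (KQ * e * P) / M^2"
    using h3 by (intro divide_right_mono mult_left_mono) auto
  finally have "KB * N^2 \<le> KB * (C1^2 * (KQ * e * P) / M^2)" using KB by (intro mult_left_mono) auto
  with h7 have "(M/2)^2 * P \<le> KB * (C1^2 * (KQ * e * P) / M^2)" by linarith
  then have "(M/2)^2 * P * M^2 \<le> KB * (C1^2 * (KQ * e * P))"
    using M by (simp add: field_simps)
  then have "(M^4 / 4) * P \<le> (KB * C1^2 * KQ * e) * P"
    by (simp add: power2_eq_square power4_eq_xxxx field_simps)
  then have A: "M^4 / 4 \<le> KB * C1^2 * KQ * e" using P by (simp add: mult_le_cancel_right)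
  have den: "8 * KB * KQ * C1^2 > 0" using KB KQ C1 by simp
  have "e * (8 * KB * KQ * C1^2) \<le> M^4" using e den by (simp add: pos_le_divide_eq)
  then have "KB * C1^2 * KQ * e \<le> M^4 / 8" by (simp add: field_simps)
  with A have "M^4 / 4 \<le> M^4 / 8" by linarith
  moreover have "M^4 > 0" using M by simp
  ultimately show False by simp
qed

lemma core2:
  fixes B :: "'a::chilbert_space \<Rightarrow> 'a"
  assumes sa: "self_adjoint_op D A" and bB: "bounded_op B"
    and symB: "\<And>x y. cinner (B x) y = cinner x (B y)" and nnB: "nonneg_op B"
    and RD: "\<And>u. R u \<in> D" and Req: "\<And>u. A (R u) - complex_of_real c *\<^sub>C R u = u"
    and Rb: "\<And>u. norm (R u) \<le> C * norm u" and C0: "C \<ge> 0"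
    and linR: "clinear_on UNIV R" and symR: "\<And>u v. cinner (R u) v = cinner u (R v)"
    and nsp: "\<And>t. complex_of_real c \<notin> op_spectrum D (\<lambda>x. A x + t *\<^sub>R B x)"
  shows "cinner (B x) (R (B x)) = 0"
proof -
  have linB: "clinear_on UNIV B" and "\<exists>K. \<forall>x. norm (B x) \<le> K * norm x"
    using bB unfolding bounded_op_def by auto
  then obtain KB0 where KB0: "\<And>x. norm (B x) \<le> KB0 * norm x" by blast
  define KB where "KB = max KB0 1"
  have KBb: "norm (B y) \<le> KB * norm y" for y
  proof -
    have "KB0 * norm y \<le> KB * norm y" unfolding KB_def by (intro mult_right_mono) auto
    then show ?thesis using KB0[of y] by linarith
  qed
  have KBp: "KB > 0" unfolding KB_def by simp
  define p where "p y = Re (cinner y (B y))" for y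
  have posB: "\<And>u. 0 \<le> Re (cinner u (B u))" using nnB unfolding nonneg_op_def by blast
  have p0: "0 \<le> p y" for y unfolding p_def by (rule posB)
  have pB: "(norm (B y))\<^sup>2 \<le> KB * p y" for y
    unfolding p_def by (rule pos_op_bound[OF linB symB posB]) (use KBp KBb in auto)
  define q where "q y = Re (cinner (B y) (R (B y)))" for y
  have qIm: "Im (cinner (B y) (R (B y))) = 0" for y
  proof -
    have "cinner (B y) (R (B y)) = cnj (cinner (B y) (R (B y)))"
      using symR[of "B y" "B y"] cinner_commute[of "R (B y)" "B y"] by simp
    then show ?thesis by (metis cnj.sel(2) equation_minus_iff neg_equal_zero)
  qed
  have qb: "\<bar>q y\<bar> \<le> C * KB * p y" for y
  proof -
    have "\<bar>q y\<bar> \<le> cmod (cinner (B y) (R (B y)))" unfolding q_def by (rule abs_Re_le_cmod)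
    also have "\<dots> \<le> norm (B y) * norm (R (B y))" by (rule cinner_CS)
    also have "\<dots> \<le> norm (B y) * (C * norm (B y))" by (intro mult_left_mono Rb) auto
    also have "\<dots> = C * (norm (B y))\<^sup>2" by (simp add: power2_eq_square)
    also have "\<dots> \<le> C * (KB * p y)" using C0 pB by (intro mult_left_mono) auto
    finally show ?thesis by (simp add: mult.assoc)
  qed
  show ?thesis
  proof (rule ccontr)
    assume ne: "cinner (B x) (R (B x)) \<noteq> 0"
    then have qx: "q x \<noteq> 0" using qIm[of x] unfolding q_def by (simp add: complex_eq_iff)
    define s :: real where "s = (if q x > 0 then 1 else -1)"
    have s2: "s * s = 1" and sabs: "\<bar>s\<bar> = 1" unfolding s_def by auto
    have sq: "s * q x > 0" using qx unfolding s_def by auto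
    have sle: "s * q y \<le> \<bar>q y\<bar>" for y unfolding s_def by auto
    have px: "p x > 0"
    proof (rule ccontr)
      assume "\<not> p x > 0"
      then have "p x = 0" using p0[of x] by simp
      then show False using qb[of x] qx by simp
    qed
    define SS where "SS = {s * q y / p y | y. p y > 0}"
    have xSS: "s * q x / p x \<in> SS" unfolding SS_def using px by blast
    have SSne: "SS \<noteq> {}" using xSS by blast
    have SSbdd: "bdd_above SS"
    proof (rule bdd_aboveI)
      fix v assume "v \<in> SS"
      then obtain y where y: "v = s * q y / p y" "p y > 0" unfolding SS_def by blast
      have "s * q y \<le> C * KB * p y" using sle[of y] qb[of y] by linarith
      then show "v \<le> C * KB" using y by (simp add: pos_divide_le_eq)
    qed
    define M where "M = Sup SS"
    have Mge: "s * q x / p x \<le> M" unfolding M_def by (rule cSup_upper[OF xSS SSbdd])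
    have Mpos: "M > 0" using Mge sq px by (smt (verit) divide_pos_pos)
    have hM: "s * q y \<le> M * p y" for y
    proof (cases "p y > 0")
      case True
      then have "s * q y / p y \<in> SS" unfolding SS_def by blast
      then have "s * q y / p y \<le> M" unfolding M_def by (rule cSup_upper[OF _ SSbdd])
      then show ?thesis using True by (simp add: pos_divide_le_eq)
    next
      case False
      then have "p y = 0" using p0[of y] by simp
      then have "q y = 0" using qb[of y] by simp
      then show ?thesis using \<open>p y = 0\<close> by simp
    qed
    define Q where "Q y = M *\<^sub>R B y - s *\<^sub>R B (R (B y))" for y
    have linQ: "clinear_on UNIV Q"
      unfolding clinear_on_def Q_def
      by (simp add: lin_add[OF linB] lin_add[OF linR] lin_scaleC[OF linB] lin_scaleC[OF linR]
          scaleC_scaleR_commute scaleC_diff_right scaleR_add_right)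
    have symQ: "cinner (Q u) v = cinner u (Q v)" for u v
      unfolding Q_def by (simp add: cinner_diff_left cinner_diff_right cinner_scaleR_left cinner_scaleR_right symB symR)
    have Qform: "Re (cinner y (Q y)) = M * p y - s * q y" for y
    proof -
      have "cinner y (B (R (B y))) = cinner (B y) (R (B y))" by (simp add: symB)
      then show ?thesis unfolding Q_def p_def q_def
        by (simp add: cinner_diff_right cinner_scaleR_right)
    qed
    have posQ: "0 \<le> Re (cinner y (Q y))" for y using hM[of y] Qform[of y] by simp
    define KQ where "KQ = M * KB + KB * C * KB"
    have KQ0: "KQ \<ge> 0" unfolding KQ_def using Mpos KBp C0 by simp
    have Qbd: "norm (Q y) \<le> KQ * norm y" for y
    proof -
      have "norm (Q y) \<le> norm (M *\<^sub>R B y) + norm (s *\<^sub>R B (R (B y)))"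
        unfolding Q_def by (rule norm_triangle_ineq4)
      also have "\<dots> = M * norm (B y) + norm (B (R (B y)))" using Mpos sabs by simp
      also have "\<dots> \<le> M * (KB * norm y) + KB * (C * (KB * norm y))"
      proof (intro add_mono mult_left_mono)
        show "norm (B y) \<le> KB * norm y" by (rule KBb)
        show "0 \<le> M" using Mpos by simp
        have "norm (B (R (B y))) \<le> KB * norm (R (B y))" by (rule KBb)
        also have "\<dots> \<le> KB * (C * norm (B y))" using KBp by (intro mult_left_mono Rb) auto
        also have "\<dots> \<le> KB * (C * (KB * norm y))" using KBp C0 KBb by (intro mult_left_mono) auto
        finally show "norm (B (R (B y))) \<le> KB * (C * (KB * norm y))" .
      qed
      also have "\<dots> = KQ * norm y" unfolding KQ_def by (simp add: algebra_simps)
      finally show ?thesis .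
    qed
    have QQ: "(norm (Q y))\<^sup>2 \<le> KQ * (M * p y - s * q y)" for y
      using pos_op_bound[OF linQ symQ posQ KQ0 Qbd, of y] Qform[of y] by simp
    define t where "t = - s / M"
    have Tid: "A (R (B y)) + t *\<^sub>R B (R (B y)) - complex_of_real c *\<^sub>C R (B y) = (1 / M) *\<^sub>R Q y" for y
    proof -
      have "A (R (B y)) + t *\<^sub>R B (R (B y)) - complex_of_real c *\<^sub>C R (B y)
          = (A (R (B y)) - complex_of_real c *\<^sub>C R (B y)) + t *\<^sub>R B (R (B y))"
        by (simp add: algebra_simps)
      also have "\<dots> = B y + t *\<^sub>R B (R (B y))" by (simp only: Req)
      also have "\<dots> = (1 / M) *\<^sub>R Q y"
        unfolding Q_def t_def using Mpos by (simp add: scaleR_diff_right scaleR_scaleR)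
      finally show ?thesis .
    qed
    have nb: "\<not> (\<exists>C'. \<forall>y\<in>D. norm y \<le> C' * norm (A y + t *\<^sub>R B y - complex_of_real c *\<^sub>C y))"
    proof
      assume "\<exists>C'. \<forall>y\<in>D. norm y \<le> C' * norm (A y + t *\<^sub>R B y - complex_of_real c *\<^sub>C y)"
      then obtain C' where C': "\<forall>y\<in>D. norm y \<le> C' * norm (A y + t *\<^sub>R B y - complex_of_real c *\<^sub>C y)"
        by blast
      define C1 where "C1 = max C' 1"
      have C1b: "norm y \<le> C1 * norm (A y + t *\<^sub>R B y - complex_of_real c *\<^sub>C y)" if "y \<in> D" for y
      proof -
        have "C' * norm (A y + t *\<^sub>R B y - complex_of_real c *\<^sub>C y)
            \<le> C1 * norm (A y + t *\<^sub>R B y - complex_of_real c *\<^sub>C y)"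
          unfolding C1_def by (intro mult_right_mono) auto
        then show ?thesis using C' that by force
      qed
      have C1p: "C1 > 0" unfolding C1_def by simp
      define KQ' where "KQ' = KQ + 1"
      have KQ'p: "KQ' > 0" using KQ0 unfolding KQ'_def by simp
      define e where "e = min (M/2) (M^4 / (8 * KB * KQ' * C1^2))"
      have ep: "e > 0" unfolding e_def using Mpos KBp KQ'p C1p by simp
      have "M - e < Sup SS" using ep unfolding M_def by simp
      then obtain v where "v \<in> SS" "M - e < v" using less_cSupD[OF SSne] by blast
      then obtain y where y: "p y > 0" "M - e < s * q y / p y" unfolding SS_def by blast
      have h1: "(M - e) * p y < s * q y" using y by (simp add: pos_less_divide_eq)
      have h2: "(M/2) * p y \<le> s * q y"
      proof -
        have "e \<le> M/2" unfolding e_def by simp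
        then have "(M/2) * p y \<le> (M - e) * p y" using y(1) by (intro mult_right_mono) auto
        then show ?thesis using h1 by linarith
      qed
      define r where "r = R (B y)"
      have rD: "r \<in> D" unfolding r_def by (rule RD)
      have h3: "(norm (Q y))\<^sup>2 \<le> KQ' * e * p y"
      proof -
        have "M * p y - s * q y \<le> e * p y" using h1 by (simp add: algebra_simps)
        moreover have "0 \<le> M * p y - s * q y" using hM[of y] by simp
        ultimately have "KQ * (M * p y - s * q y) \<le> KQ' * (e * p y)"
          using KQ0 ep y(1) unfolding KQ'_def by (intro mult_mono) auto
        then show ?thesis using QQ[of y] by (simp add: mult.assoc)
      qed
      have h4: "norm (A r + t *\<^sub>R B r - complex_of_real c *\<^sub>C r) = norm (Q y) / M"
        unfolding r_def Tid using Mpos by simp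
      have h5: "(s * q y)^2 \<le> KB * p y * (norm r)^2"
      proof -
        have "\<bar>q y\<bar> \<le> cmod (cinner (B y) r)" unfolding q_def r_def by (rule abs_Re_le_cmod)
        also have "\<dots> \<le> norm (B y) * norm r" by (rule cinner_CS)
        finally have "(q y)^2 \<le> (norm (B y) * norm r)^2"
          by (metis abs_ge_zero power2_abs power_mono)
        also have "\<dots> = (norm (B y))^2 * (norm r)^2" by (simp add: power_mult_distrib)
        also have "\<dots> \<le> KB * p y * (norm r)^2" using pB[of y] by (intro mult_right_mono) auto
        finally have fin: "(q y)^2 \<le> KB * p y * (norm r)^2" .
        have "(s * q y)^2 = (s * s) * (q y)^2" by (simp add: power2_eq_square algebra_simps)
        then show ?thesis using s2 fin by simp
      qed
      have h6: "((M/2) * p y)^2 \<le> KB * p y * (norm r)^2"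
      proof -
        have "((M/2) * p y)^2 \<le> (s * q y)^2" using h2 Mpos y(1) by (intro power_mono) auto
        then show ?thesis using h5 by linarith
      qed
      have h7: "(M/2)^2 * p y \<le> KB * (norm r)^2"
      proof -
        have "((M/2)^2 * p y) * p y \<le> (KB * (norm r)^2) * p y"
          using h6 by (simp add: power_mult_distrib power2_eq_square algebra_simps)
        then show ?thesis using y(1) by (simp add: mult_le_cancel_right)
      qed
      have h8: "norm r \<le> C1 * (norm (Q y) / M)" using C1b[OF rD] h4 by simp
      have eb: "e \<le> M^4 / (8 * KB * KQ' * C1^2)" unfolding e_def by simp
      show False
        by (rule arith_contra[OF Mpos y(1) KBp KQ'p C1p eb h7 h3 h8]) auto
    qed
    then have "complex_of_real c \<in> op_spectrum D (\<lambda>x. A x + t *\<^sub>R B x)"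
      unfolding op_spectrum_def by simp
    then show False using nsp by blast
  qed
qed



theorem corollary2p6:
  fixes D :: "'a::chilbert_space set" and A B :: "'a \<Rightarrow> 'a"
  assumes "self_adjoint_op D A"
    and "self_adjoint_op UNIV B" and "bounded_op B" and "nonneg_op B"
    and "\<exists>x. B x \<noteq> 0"
  shows "(\<Union>t::real. op_spectrum D (\<lambda>x. A x + t *\<^sub>R B x)) \<subseteq> \<real>
     \<and> closure {r::real. complex_of_real r \<in> (\<Union>t::real. op_spectrum D (\<lambda>x. A x + t *\<^sub>R B x))} = UNIV"
proof -
  have symB: "\<And>x y. cinner (B x) y = cinner x (B y)" using assms(2) sa_sym[of UNIV B] by blast
  have p1: "(\<Union>t::real. op_spectrum D (\<lambda>x. A x + t *\<^sub>R B x)) \<subseteq> \<real>"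
    using sa_spectrum_real[OF sa_perturb[OF assms(1) assms(3) symB]] by blast
  let ?U = "{r::real. complex_of_real r \<in> (\<Union>t::real. op_spectrum D (\<lambda>x. A x + t *\<^sub>R B x))}"
  have "r0 \<in> closure ?U" for r0
    unfolding closure_approachable
  proof (intro allI impI)
    fix e :: real assume e: "e > 0"
    show "\<exists>y\<in>?U. dist y r0 < e"
    proof (rule ccontr)
      assume nex: "\<not> (\<exists>y\<in>?U. dist y r0 < e)"
      have nsp: "complex_of_real c \<notin> op_spectrum D (\<lambda>x. A x + t *\<^sub>R B x)" if "\<bar>c - r0\<bar> < e" for c t
        using nex that by (auto simp: dist_real_def)
      have nsp0: "complex_of_real c \<notin> op_spectrum D A" if "\<bar>c - r0\<bar> < e" for c
      proof -
        have "(\<lambda>x. A x + (0::real) *\<^sub>R B x) = A" by simp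
        then show ?thesis using nsp[OF that, of 0] by simp
      qed
      obtain R1 C1 where R1: "\<And>u. R1 u \<in> D" "\<And>u. A (R1 u) - complex_of_real r0 *\<^sub>C R1 u = u"
        "\<And>u. norm (R1 u) \<le> C1 * norm u" "C1 \<ge> 0"
        "\<And>x. x \<in> D \<Longrightarrow> A x - complex_of_real r0 *\<^sub>C x = 0 \<Longrightarrow> x = 0"
        "clinear_on UNIV R1" "\<And>u v. cinner (R1 u) v = cinner u (R1 v)"
        using resolvent[OF assms(1) nsp0[of r0]] e by auto
      define d where "d = r0 + min (e/2) (1 / (C1 + 1))"
      have dpos: "min (e/2) (1 / (C1 + 1)) > 0" using e R1(4) by simp
      have dr: "\<bar>d - r0\<bar> < e" unfolding d_def using e dpos by auto
      have dne: "r0 \<noteq> d" unfolding d_def using dpos by linarith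
      have small: "\<bar>r0 - d\<bar> * C1 \<le> 1"
      proof -
        have "\<bar>r0 - d\<bar> \<le> 1 / (C1 + 1)" unfolding d_def using dpos by auto
        then have "\<bar>r0 - d\<bar> * C1 \<le> (1 / (C1 + 1)) * C1" using R1(4) by (intro mult_right_mono) auto
        also have "\<dots> \<le> 1" using R1(4) by (simp add: field_simps)
        finally show ?thesis .
      qed
      obtain R2 C2 where R2: "\<And>u. R2 u \<in> D" "\<And>u. A (R2 u) - complex_of_real d *\<^sub>C R2 u = u"
        "\<And>u. norm (R2 u) \<le> C2 * norm u" "C2 \<ge> 0"
        "\<And>x. x \<in> D \<Longrightarrow> A x - complex_of_real d *\<^sub>C x = 0 \<Longrightarrow> x = 0"
        "clinear_on UNIV R2" "\<And>u v. cinner (R2 u) v = cinner u (R2 v)"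
        using resolvent[OF assms(1) nsp0[OF dr]] by auto
      have "B x = 0" for x
      proof (rule two_point[OF assms(1) R1 R2(1,2) dne small])
        show "cinner (B x) (R1 (B x)) = 0"
          by (rule core2[OF assms(1) assms(3) symB assms(4) R1(1,2,3,4,6,7)]) (use nsp e in auto)
        show "cinner (B x) (R2 (B x)) = 0"
          by (rule core2[OF assms(1) assms(3) symB assms(4) R2(1,2,3,4,6,7)]) (use nsp dr in auto)
      qed
      then show False using assms(5) by blast
    qed
  qed
  then have "closure ?U = UNIV" by auto
  then show ?thesis using p1 by blast
qed


end
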